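(* Let $(M,d)$ be a complete metric space and $X\subseteq M$ compact. Assume that every $\mu\in P(X)$ admits a barycenter in $M$, and that $conv(X)$ is compact. Assume moreover that at least one variance maximizing probability measure $\mu\in P(X)$ (i.e. a maximizer of $Var$ over $P(X)$) has a unique barycenter. Then the circumradius of $X$ in $M$ equals the circumradius of $i(X)$ in $(P(M),W_2)$.
   Context: $P(\cdot)$ denotes Borel probability measures. $Var(\mu)=\inf_{y\in M}\int_X d^2(x,y)\,d\mu(x)$, and a barycenter of $\mu$ is a point of $M$ attaining this infimum; $conv(X)$ is the set of all barycenters of measures in $P(X)$. The circumradius of $X$ in $M$ is $\inf_{y\in M}\sup_{x\in X}d(x,y)$. $W_2$ is the Wasserstein distance on $P(M)$, with $W_2^2(\delta_x,\nu)=\int_M d^2(x,y)\,d\nu(y)$; $i(x)=\delta_x$, and the circumradius of $i(X)$ is $\inf_{\nu\in P(M)}\sup_{x\in X}W_2(\delta_x,\nu)$. *)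

theory Defs
  imports "HOL-Probability.Probability"
begin

text \<open>The ambient complete metric space M is the whole type 'a.\<close>

definition prob_measures :: "'a::metric_space measure set" where
  "prob_measures = {\<nu>. prob_space \<nu> \<and> sets \<nu> = sets borel}"

definition prob_measures_on :: "'a::metric_space set \<Rightarrow> 'a measure set" where
  "prob_measures_on X = {\<mu> \<in> prob_measures. emeasure \<mu> X = 1}"

definition Var :: "'a::metric_space measure \<Rightarrow> real" where
  "Var \<mu> = (INF y. \<integral>x. (dist x y)\<^sup>2 \<partial>\<mu>)"

definition is_barycenter :: "'a::metric_space measure \<Rightarrow> 'a \<Rightarrow> bool" where
  "is_barycenter \<mu> y \<longleftrightarrow> (\<integral>x. (dist x y)\<^sup>2 \<partial>\<mu>) = Var \<mu>"

definition conv :: "'a::metric_space set \<Rightarrow> 'a set" where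
  "conv X = {y. \<exists>\<mu>\<in>prob_measures_on X. is_barycenter \<mu> y}"

definition circumradius :: "'a::metric_space set \<Rightarrow> ennreal" where
  "circumradius X = (INF y. SUP x\<in>X. ennreal (dist x y))"

text \<open>W_2(delta_x, nu) = (integral of d(x,y)^2 d nu(y))^(1/2), possibly infinite.\<close>
definition W2_dirac :: "'a::metric_space \<Rightarrow> 'a measure \<Rightarrow> ennreal" where
  "W2_dirac x \<nu> =
     (let I = (\<integral>\<^sup>+ y. ennreal ((dist x y)\<^sup>2) \<partial>\<nu>)
      in if I = \<infinity> then \<infinity> else ennreal (sqrt (enn2real I)))"

definition circumradius_dirac :: "'a::metric_space set \<Rightarrow> ennreal" where
  "circumradius_dirac X = (INF \<nu>\<in>prob_measures. SUP x\<in>X. W2_dirac x \<nu>)"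

end

theory Submission imports Defs begin

lemma dist_meas[measurable]: "(\<lambda>z. dist (x::'a::metric_space) z) \<in> borel_measurable borel"
  by (intro borel_measurable_continuous_onI continuous_intros)

lemma dist_meas'[measurable]: "(\<lambda>z. dist z (x::'a::metric_space)) \<in> borel_measurable borel"
  by (intro borel_measurable_continuous_onI continuous_intros)

lemma W2_sq: "(W2_dirac x \<nu>)^2 = (\<integral>\<^sup>+ y. ennreal ((dist x y)\<^sup>2) \<partial>\<nu>)"
proof -
  define I where "I = (\<integral>\<^sup>+ y. ennreal ((dist x y)\<^sup>2) \<partial>\<nu>)"
  show ?thesis
  proof (cases "I = \<infinity>")
    case True
    then show ?thesis unfolding W2_dirac_def I_def[symmetric] by simp
  next
    case False
    have "(ennreal (sqrt (enn2real I)))^2 = ennreal ((sqrt (enn2real I))^2)"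
      by (simp add: ennreal_power)
    also have "\<dots> = ennreal (enn2real I)" by simp
    also have "\<dots> = I" using False by (simp add: less_top)
    finally show ?thesis using False unfolding W2_dirac_def I_def[symmetric] by simp
  qed
qed

lemma W2_return: "W2_dirac x (return borel y) = ennreal (dist x y)"
proof -
  have "(\<integral>\<^sup>+ z. ennreal ((dist x z)\<^sup>2) \<partial>return borel y) = ennreal ((dist x y)\<^sup>2)"
    by (rule nn_integral_return) auto
  then show ?thesis unfolding W2_dirac_def by simp
qed

lemma L1: "circumradius_dirac X \<le> circumradius X"
  unfolding circumradius_dirac_def circumradius_def
proof (rule INF_mono)
  fix y assume "y \<in> (UNIV::'a set)"
  have "return borel y \<in> prob_measures"
    unfolding prob_measures_def by (auto intro: prob_space_return)
  then show "\<exists>\<nu>\<in>prob_measures. (SUP x\<in>X. W2_dirac x \<nu>) \<le> (SUP x\<in>X. ennreal (dist x y))"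
    by (intro bexI[of _ "return borel y"]) (auto simp: W2_return)
qed


lemma PX_facts:
  fixes X :: "'a::metric_space set"
  assumes "compact X" "\<mu> \<in> prob_measures_on X"
  shows "prob_space \<mu>" "sets \<mu> = sets borel" "AE x in \<mu>. x \<in> X"
proof -
  show ps: "prob_space \<mu>" and s: "sets \<mu> = sets borel"
    using assms(2) unfolding prob_measures_on_def prob_measures_def by auto
  have Xs: "X \<in> sets \<mu>" using s assms(1) by (simp add: borel_closed compact_imp_closed)
  have "emeasure \<mu> X = 1" using assms(2) unfolding prob_measures_on_def by auto
  then show "AE x in \<mu>. x \<in> X"
    using prob_space.AE_in_set_eq_1[OF ps Xs] by (simp add: Sigma_Algebra.measure_def)
qed

lemma d2_meas[measurable]:
  assumes "sets \<mu> = sets borel"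
  shows "(\<lambda>x. (dist x (y::'a::metric_space))\<^sup>2) \<in> borel_measurable \<mu>"
  using assms by (simp cong: measurable_cong_sets)

lemma d2_integrable:
  fixes X :: "'a::metric_space set"
  assumes "compact X" "\<mu> \<in> prob_measures_on X"
  shows "integrable \<mu> (\<lambda>x. (dist x y)\<^sup>2)"
proof -
  interpret prob_space \<mu> using PX_facts[OF assms] by simp
  obtain e where e: "\<forall>x\<in>X. dist y x \<le> e"
    using bounded_any_center compact_imp_bounded[OF assms(1)] by blast
  have "AE x in \<mu>. norm ((dist x y)\<^sup>2) \<le> norm (e^2)"
    using PX_facts(3)[OF assms] 
  proof eventually_elim
    case (elim x)
    then have "dist x y \<le> e" using e by (simp add: dist_commute)
    then show ?case by (simp add: power_mono)
  qed
  then show ?thesis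
    by (intro Bochner_Integration.integrable_bound[OF integrable_const[of "e^2"]]) (auto simp: PX_facts[OF assms])
qed

lemma F_nn:
  fixes X :: "'a::metric_space set"
  assumes "compact X" "\<mu> \<in> prob_measures_on X"
  shows "ennreal (\<integral>x. (dist x y)\<^sup>2 \<partial>\<mu>) = (\<integral>\<^sup>+x. ennreal ((dist x y)\<^sup>2) \<partial>\<mu>)"
  by (rule nn_integral_eq_integral[symmetric]) (auto intro: d2_integrable[OF assms])

lemma Var_le: "Var \<mu> \<le> (\<integral>x. (dist x y)\<^sup>2 \<partial>\<mu>)"
  unfolding Var_def
  by (rule cINF_lower) (auto intro!: bdd_belowI[of _ 0])

lemma Var_nonneg: "0 \<le> Var \<mu>"
  unfolding Var_def by (rule cINF_greatest) auto


lemma dist_meas_raw[measurable (raw)]: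
  "f \<in> M \<rightarrow>\<^sub>M borel \<Longrightarrow> (\<lambda>z. dist (x::'a::metric_space) (f z)) \<in> borel_measurable M"
  "f \<in> M \<rightarrow>\<^sub>M borel \<Longrightarrow> (\<lambda>z. dist (f z) (x::'a::metric_space)) \<in> borel_measurable M"
  by (rule measurable_compose[OF _ dist_meas] measurable_compose[OF _ dist_meas'], assumption)+

lemma compact_dense_countable:
  fixes X :: "'a::metric_space set"
  assumes "compact X"
  obtains D where "countable D" "D \<subseteq> X" "\<And>x e. x \<in> X \<Longrightarrow> 0 < e \<Longrightarrow> \<exists>c\<in>D. dist x c < e"
proof -
  have "\<forall>n. \<exists>F. F \<subseteq> X \<and> finite F \<and> X \<subseteq> \<Union>((\<lambda>c. ball c (1/Suc n)) ` F)"
  proof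
    fix n
    obtain F where "F \<subseteq> X" "finite F" "X \<subseteq> \<Union>((\<lambda>c. ball c (1/Suc n)) ` F)"
      by (rule compactE_image[OF assms, of X "\<lambda>c. ball c (1/Suc n)"]) auto
    then show "\<exists>F. F \<subseteq> X \<and> finite F \<and> X \<subseteq> \<Union>((\<lambda>c. ball c (1/Suc n)) ` F)" by blast
  qed
  then obtain F where F: "\<And>n. F n \<subseteq> X" "\<And>n. finite (F n)" "\<And>n. X \<subseteq> \<Union>((\<lambda>c. ball c (1/Suc n)) ` F n)"
    by metis
  show ?thesis
  proof
    show "countable (\<Union>n. F n)" using F(2) by (auto intro: countable_finite)
    show "(\<Union>n. F n) \<subseteq> X" using F(1) by auto
    fix x e assume x: "x \<in> X" and e: "(0::real) < e"
    obtain n where n: "1 / Suc n < e" using e by (metis nat_approx_posE)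
    obtain c where "c \<in> F n" "x \<in> ball c (1/Suc n)" using F(3)[of n] x by auto
    then show "\<exists>c\<in>(\<Union>n. F n). dist x c < e" using n
      by (intro bexI[of _ c]) (auto simp: dist_commute)
  qed
qed

lemma joint_meas:
  fixes X :: "'a::metric_space set"
  assumes "compact X"
  shows "(\<lambda>(x,y). indicator X x * ennreal ((dist x y)\<^sup>2)) \<in> borel_measurable (borel \<Otimes>\<^sub>M borel)"
proof -
  obtain D where D: "countable D" "D \<subseteq> X" "\<And>x e. x \<in> X \<Longrightarrow> 0 < e \<Longrightarrow> \<exists>c\<in>D. dist x c < e"
    using compact_dense_countable[OF assms] by blast
  have key: "ennreal (dist x y) = (INF c\<in>D. ennreal (dist x c + dist c y))" if x: "x \<in> X" for x y
  proof (rule antisym)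
    show "ennreal (dist x y) \<le> (INF c\<in>D. ennreal (dist x c + dist c y))"
      by (rule INF_greatest, rule ennreal_leI, rule dist_triangle)
    show "(INF c\<in>D. ennreal (dist x c + dist c y)) \<le> ennreal (dist x y)"
    proof (rule ennreal_le_epsilon)
      fix e :: real assume e: "0 < e"
      obtain c where c: "c \<in> D" "dist x c < e/2" using D(3)[OF x, of "e/2"] e by auto
      have "(INF c\<in>D. ennreal (dist x c + dist c y)) \<le> ennreal (dist x c + dist c y)"
        using c(1) by (rule INF_lower)
      also have "\<dots> \<le> ennreal (dist x y + e)"
        using c(2) dist_triangle[of c y x] by (intro ennreal_leI) (simp add: dist_commute)
      also have "\<dots> = ennreal (dist x y) + ennreal e"
        using e by (simp add: ennreal_plus)
      finally show "(INF c\<in>D. ennreal (dist x c + dist c y)) \<le> ennreal (dist x y) + ennreal e" .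
    qed
  qed
  have eq: "(\<lambda>(x,y). indicator X x * ennreal ((dist x y)\<^sup>2)) =
        (\<lambda>p. indicator X (fst p) * (INF c\<in>D. ennreal (dist (fst p) c + dist c (snd p)))^2)"
  proof (rule ext, clarify)
    fix x y
    show "indicator X x * ennreal ((dist x y)\<^sup>2) =
       indicator X (fst (x, y)) * (INF c\<in>D. ennreal (dist (fst (x, y)) c + dist c (snd (x, y))))^2"
      by (cases "x \<in> X") (simp_all add: key[symmetric] ennreal_power del: ennreal_plus)
  qed
  have Xb: "X \<in> sets borel" using assms by (simp add: borel_closed compact_imp_closed)
  show ?thesis unfolding eq
    using Xb D(1) by measurable
qed


lemma L3:
  fixes X :: "'a::metric_space set"
  assumes X: "compact X" and mu: "\<mu> \<in> prob_measures_on X" and nu: "\<nu> \<in> prob_measures"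
  shows "ennreal (Var \<mu>) \<le> (SUP x\<in>X. W2_dirac x \<nu>)^2"
proof -
  interpret mu: prob_space \<mu> using PX_facts[OF X mu] by simp
  have snu: "sets \<nu> = sets borel" and pnu: "prob_space \<nu>" using nu unfolding prob_measures_def by auto
  interpret nu: prob_space \<nu> by (rule pnu)
  interpret pair_sigma_finite \<mu> \<nu>
    by (simp add: pair_sigma_finite_def mu.sigma_finite_measure_axioms nu.sigma_finite_measure_axioms)
  define f where "f = (\<lambda>x y. indicator X x * ennreal ((dist x y)\<^sup>2))"
  define c where "c = (SUP x\<in>X. W2_dirac x \<nu>)"
  have meas: "case_prod f \<in> borel_measurable (\<mu> \<Otimes>\<^sub>M \<nu>)"
    unfolding f_def measurable_cong_sets[OF sets_pair_measure_cong[OF PX_facts(2)[OF X mu] snu] refl]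
    by (rule joint_meas[OF X])
  have "ennreal (Var \<mu>) = (\<integral>\<^sup>+ y. ennreal (Var \<mu>) \<partial>\<nu>)"
    by (simp add: nu.emeasure_space_1)
  also have "\<dots> \<le> (\<integral>\<^sup>+ y. (\<integral>\<^sup>+ x. f x y \<partial>\<mu>) \<partial>\<nu>)"
  proof (rule nn_integral_mono)
    fix y
    have "(\<integral>\<^sup>+ x. f x y \<partial>\<mu>) = (\<integral>\<^sup>+ x. ennreal ((dist x y)\<^sup>2) \<partial>\<mu>)"
      unfolding f_def
      by (rule nn_integral_cong_AE) (use PX_facts(3)[OF X mu] in \<open>auto elim!: eventually_mono\<close>)
    also have "\<dots> = ennreal (\<integral>x. (dist x y)\<^sup>2 \<partial>\<mu>)" by (rule F_nn[OF X mu, symmetric])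
    finally show "ennreal (Var \<mu>) \<le> (\<integral>\<^sup>+ x. f x y \<partial>\<mu>)"
      using Var_le[of \<mu> y] by (simp add: ennreal_leI)
  qed
  also have "\<dots> = (\<integral>\<^sup>+ x. (\<integral>\<^sup>+ y. f x y \<partial>\<nu>) \<partial>\<mu>)" by (rule Fubini'[OF meas])
  also have "\<dots> \<le> (\<integral>\<^sup>+ x. c^2 \<partial>\<mu>)"
  proof (rule nn_integral_mono_AE)
    show "AE x in \<mu>. (\<integral>\<^sup>+ y. f x y \<partial>\<nu>) \<le> c^2"
      using PX_facts(3)[OF X mu]
    proof eventually_elim
      case (elim x)
      then have "(\<integral>\<^sup>+ y. f x y \<partial>\<nu>) = (W2_dirac x \<nu>)^2" unfolding f_def W2_sq by simp
      also have "\<dots> \<le> c^2" unfolding c_def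
        by (rule power_mono) (use elim in \<open>auto intro: SUP_upper\<close>)
      finally show ?case .
    qed
  qed
  also have "\<dots> = c^2" by (simp add: mu.emeasure_space_1)
  finally show ?thesis unfolding c_def .
qed


lemma L4:
  fixes X :: "'a::metric_space set"
  assumes X: "compact X" and mu: "\<mu> \<in> prob_measures_on X" and x0: "x0 \<in> X"
    and t: "0 \<le> t" "t \<le> 1"
  shows "\<exists>\<mu>t\<in>prob_measures_on X. \<forall>y. (\<integral>x. (dist x y)\<^sup>2 \<partial>\<mu>t)
            = (1-t) * (\<integral>x. (dist x y)\<^sup>2 \<partial>\<mu>) + t * (dist x0 y)\<^sup>2"
proof -
  have smu: "sets \<mu> = sets borel" and pmu: "prob_space \<mu>" using PX_facts[OF X mu] by auto
  define p where "p = measure_pmf (bernoulli_pmf t)"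
  define K where "K = (\<lambda>b. if b then return borel x0 else \<mu>)"
  define \<mu>t where "\<mu>t = p \<bind> K"
  have Kc: "K \<in> count_space UNIV \<rightarrow>\<^sub>M prob_algebra borel"
    unfolding measurable_count_space_eq1 space_prob_algebra
  proof (rule Pi_I)
    fix b :: bool
    show "K b \<in> {N. sets N = sets borel \<and> prob_space N}"
      by (cases b) (simp_all add: K_def smu pmu prob_space_return)
  qed
  have Kprob: "K \<in> p \<rightarrow>\<^sub>M prob_algebra borel"
    using Kc unfolding p_def measurable_cong_sets[OF sets_measure_pmf_count_space refl] .
  have pA: "p \<in> space (prob_algebra (count_space UNIV))"
    unfolding space_prob_algebra p_def by (auto simp: measure_pmf.prob_space_axioms)
  have pt: "prob_space \<mu>t" unfolding \<mu>t_def by (rule prob_space_bind'[OF pA Kc])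
  have st: "sets \<mu>t = sets borel" unfolding \<mu>t_def by (rule sets_bind'[OF pA Kc])
  have Ksub: "K \<in> p \<rightarrow>\<^sub>M subprob_algebra borel" by (rule measurable_prob_algebraD[OF Kprob])
  have Xb: "X \<in> sets borel" using X by (simp add: borel_closed compact_imp_closed)
  have "emeasure \<mu>t X = (\<integral>\<^sup>+b. emeasure (K b) X \<partial>p)"
    unfolding \<mu>t_def by (rule emeasure_bind_prob_algebra[OF pA Kc Xb])
  also have "\<dots> = emeasure (return borel x0) X * ennreal t + emeasure \<mu> X * ennreal (1 - t)"
    using t unfolding p_def K_def by (subst nn_integral_bernoulli_pmf) auto
  also have "\<dots> = 1"
  proof -
    have m1: "emeasure \<mu> X = 1" using mu unfolding prob_measures_on_def by auto
    have "ennreal t + ennreal (1-t) = ennreal (t + (1-t))" by (rule ennreal_plus[symmetric]) (use t in auto)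
    then show ?thesis using x0 Xb m1 by (simp add: emeasure_return)
  qed
  finally have "emeasure \<mu>t X = 1" .
  then have mut: "\<mu>t \<in> prob_measures_on X"
    using pt st unfolding prob_measures_on_def prob_measures_def by auto
  show ?thesis
  proof (intro bexI[OF _ mut] allI)
    fix y :: 'a
    have my: "(\<lambda>x. ennreal ((dist x y)\<^sup>2)) \<in> borel_measurable borel" by measurable
    have "ennreal (\<integral>x. (dist x y)\<^sup>2 \<partial>\<mu>t) = (\<integral>\<^sup>+x. ennreal ((dist x y)\<^sup>2) \<partial>\<mu>t)"
      by (rule F_nn[OF X mut])
    also have "\<dots> = (\<integral>\<^sup>+b. \<integral>\<^sup>+x. ennreal ((dist x y)\<^sup>2) \<partial>K b \<partial>p)"
      unfolding \<mu>t_def by (rule nn_integral_bind[OF my Ksub])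
    also have "\<dots> = ennreal ((dist x0 y)\<^sup>2) * ennreal t + ennreal (\<integral>x. (dist x y)\<^sup>2 \<partial>\<mu>) * ennreal (1 - t)"
      using t unfolding p_def K_def F_nn[OF X mu]
      by (subst nn_integral_bernoulli_pmf) (auto simp: nn_integral_return[OF _ my] dist_commute)
    also have "\<dots> = ennreal ((1-t) * (\<integral>x. (dist x y)\<^sup>2 \<partial>\<mu>) + t * (dist x0 y)\<^sup>2)"
    proof -
      have F0: "0 \<le> (\<integral>x. (dist x y)\<^sup>2 \<partial>\<mu>)" by (rule integral_nonneg_AE) simp
      have "ennreal ((dist x0 y)\<^sup>2) * ennreal t + ennreal (\<integral>x. (dist x y)\<^sup>2 \<partial>\<mu>) * ennreal (1 - t)
          = ennreal ((dist x0 y)\<^sup>2 * t) + ennreal ((\<integral>x. (dist x y)\<^sup>2 \<partial>\<mu>) * (1 - t))"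
        using t F0 by (simp add: ennreal_mult del: ennreal_plus)
      also have "\<dots> = ennreal ((dist x0 y)\<^sup>2 * t + (\<integral>x. (dist x y)\<^sup>2 \<partial>\<mu>) * (1 - t))"
        by (rule ennreal_plus[symmetric]) (use t F0 in auto)
      finally show ?thesis by (simp add: algebra_simps)
    qed
    finally show "(\<integral>x. (dist x y)\<^sup>2 \<partial>\<mu>t) = (1-t) * (\<integral>x. (dist x y)\<^sup>2 \<partial>\<mu>) + t * (dist x0 y)\<^sup>2"
      using t by (subst (asm) ennreal_inj) (auto intro!: integral_nonneg_AE add_nonneg_nonneg mult_nonneg_nonneg)
  qed
qed


lemma F_shift:
  fixes X :: "'a::metric_space set"
  assumes X: "compact X" and mu: "\<mu> \<in> prob_measures_on X" and K: "\<forall>x\<in>X. dist x z \<le> K"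
  shows "(\<integral>x. (dist x l)\<^sup>2 \<partial>\<mu>) \<le> (\<integral>x. (dist x z)\<^sup>2 \<partial>\<mu>) + (2*K*dist z l + (dist z l)\<^sup>2)"
proof -
  interpret prob_space \<mu> using PX_facts[OF X mu] by simp
  have "(\<integral>x. (dist x l)\<^sup>2 \<partial>\<mu>) \<le> (\<integral>x. (dist x z)\<^sup>2 + (2*K*dist z l + (dist z l)\<^sup>2) \<partial>\<mu>)"
  proof (rule integral_mono_AE)
    show "integrable \<mu> (\<lambda>x. (dist x l)\<^sup>2)" by (rule d2_integrable[OF X mu])
    show "integrable \<mu> (\<lambda>x. (dist x z)\<^sup>2 + (2*K*dist z l + (dist z l)\<^sup>2))"
      by (intro Bochner_Integration.integrable_add d2_integrable[OF X mu] integrable_const)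
    show "AE x in \<mu>. (dist x l)\<^sup>2 \<le> (dist x z)\<^sup>2 + (2*K*dist z l + (dist z l)\<^sup>2)"
      using PX_facts(3)[OF X mu]
    proof eventually_elim
      case (elim x)
      have k: "dist x z \<le> K" using K elim by auto
      have "dist x l \<le> dist x z + dist z l" by (rule dist_triangle)
      then have "(dist x l)\<^sup>2 \<le> (dist x z + dist z l)\<^sup>2" by (simp add: power_mono)
      also have "\<dots> = (dist x z)\<^sup>2 + 2 * dist x z * dist z l + (dist z l)\<^sup>2" by (simp add: power2_eq_square algebra_simps)
      also have "\<dots> \<le> (dist x z)\<^sup>2 + 2 * K * dist z l + (dist z l)\<^sup>2"
        using k by (simp add: mult_right_mono)
      finally show ?case by simp
    qed
  qed
  also have "\<dots> = (\<integral>x. (dist x z)\<^sup>2 \<partial>\<mu>) + (2*K*dist z l + (dist z l)\<^sup>2)"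
    by (subst Bochner_Integration.integral_add) (auto intro: d2_integrable[OF X mu] simp: prob_space)
  finally show ?thesis .
qed


lemma L5:
  fixes X :: "'a::metric_space set"
  assumes X: "compact X" and bary: "\<forall>\<mu>\<in>prob_measures_on X. \<exists>y. is_barycenter \<mu> y"
    and cc: "compact (conv X)" and mu: "\<mu> \<in> prob_measures_on X"
    and mx: "\<forall>\<nu>\<in>prob_measures_on X. Var \<nu> \<le> Var \<mu>"
    and uniq: "\<And>y. is_barycenter \<mu> y \<Longrightarrow> y = b" and x0: "x0 \<in> X"
  shows "(dist x0 b)\<^sup>2 \<le> Var \<mu>"
proof -
  define V where "V = Var \<mu>"
  define F where "F = (\<lambda>y. \<integral>x. (dist x y)\<^sup>2 \<partial>\<mu>)"
  define t where "t = (\<lambda>n::nat. 1 / (2 + real n))"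
  have t0: "0 < t n" "t n < 1" for n unfolding t_def by (auto simp: field_simps)
  have FV: "V \<le> F y" for y unfolding V_def F_def by (rule Var_le)
  have "\<forall>n. \<exists>bb. bb \<in> conv X \<and> (1 - t n) * F bb + t n * (dist x0 bb)\<^sup>2 \<le> V"
  proof
    fix n
    obtain \<mu>t where mut: "\<mu>t \<in> prob_measures_on X"
      and eq: "\<forall>y. (\<integral>x. (dist x y)\<^sup>2 \<partial>\<mu>t) = (1 - t n) * F y + t n * (dist x0 y)\<^sup>2"
      using L4[OF X mu x0, of "t n"] t0[of n] unfolding F_def by auto
    obtain bb where bb: "is_barycenter \<mu>t bb" using bary mut by auto
    have "bb \<in> conv X" using mut bb unfolding conv_def by auto
    moreover have "(1 - t n) * F bb + t n * (dist x0 bb)\<^sup>2 = Var \<mu>t"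
      using bb eq unfolding is_barycenter_def by simp
    moreover have "Var \<mu>t \<le> V" using mx mut unfolding V_def by auto
    ultimately show "\<exists>bb. bb \<in> conv X \<and> (1 - t n) * F bb + t n * (dist x0 bb)\<^sup>2 \<le> V" by auto
  qed
  then obtain bs where bs: "\<And>n. bs n \<in> conv X" "\<And>n. (1 - t n) * F (bs n) + t n * (dist x0 (bs n))\<^sup>2 \<le> V"
    by metis
  have d_le: "(dist x0 (bs n))\<^sup>2 \<le> V" for n
  proof -
    have "(1 - t n) * V \<le> (1 - t n) * F (bs n)" using FV t0[of n] by (intro mult_left_mono) auto
    then have "t n * (dist x0 (bs n))\<^sup>2 \<le> t n * V" using bs(2)[of n] by (simp add: algebra_simps)
    then show ?thesis using t0[of n] by simp
  qed
  have F_le: "F (bs n) \<le> V / (1 - t n)" for n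
  proof -
    have "(1 - t n) * F (bs n) \<le> V" using bs(2)[of n] t0[of n]
      by (smt (verit) mult_nonneg_nonneg zero_le_power2)
    then show ?thesis using t0[of n] by (simp add: field_simps)
  qed
  obtain l r where l: "l \<in> conv X" and r: "strict_mono r" and lim: "(bs \<circ> r) \<longlonglongrightarrow> l"
    using seq_compactE[OF compact_imp_seq_compact[OF cc], of bs] bs(1) by blast
  obtain a e where ae: "\<forall>y\<in>X \<union> conv X. dist a y \<le> e"
    using compact_imp_bounded[OF compact_Un[OF X cc]] unfolding bounded_def by blast
  define K where "K = 2 * e"
  have K: "\<forall>x\<in>X. dist x z \<le> K" if "z \<in> conv X" for z
  proof
    fix x assume x: "x \<in> X"
    have "dist x z \<le> dist a x + dist a z" using dist_triangle[of x z a] by (simp add: dist_commute)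
    also have "\<dots> \<le> K"
    proof -
      have "dist a x \<le> e" "dist a z \<le> e" using ae x that by auto
      then show ?thesis unfolding K_def by simp
    qed
    finally show "dist x z \<le> K" .
  qed
  have edist: "(\<lambda>n. dist (bs (r n)) l) \<longlonglongrightarrow> 0"
    using tendsto_dist_iff[THEN iffD1, OF lim] unfolding o_def .
  have tlim: "t \<longlonglongrightarrow> 0"
    unfolding t_def
    by (intro tendsto_divide_0[OF tendsto_const] filterlim_at_top_imp_at_infinity
        filterlim_tendsto_add_at_top[OF tendsto_const filterlim_real_sequentially])
  have trlim: "(\<lambda>n. t (r n)) \<longlonglongrightarrow> 0"
    using LIMSEQ_subseq_LIMSEQ[OF tlim r] by (simp add: o_def)
  define s where "s = (\<lambda>n. V / (1 - t (r n)) + (2*K*dist (bs (r n)) l + (dist (bs (r n)) l)\<^sup>2))"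
  have slim: "s \<longlonglongrightarrow> V / (1 - 0) + (2*K*0 + 0\<^sup>2)"
    unfolding s_def by (intro tendsto_intros trlim edist) simp
  have Fl: "F l \<le> V"
  proof (rule LIMSEQ_le_const)
    show "s \<longlonglongrightarrow> V" using slim by simp
    show "\<exists>N. \<forall>n\<ge>N. F l \<le> s n"
    proof (intro exI allI impI)
      fix n
      have "F l \<le> F (bs (r n)) + (2*K*dist (bs (r n)) l + (dist (bs (r n)) l)\<^sup>2)"
        unfolding F_def by (rule F_shift[OF X mu K[OF bs(1)]])
      also have "\<dots> \<le> s n" unfolding s_def using F_le[of "r n"] by simp
      finally show "F l \<le> s n" .
    qed
  qed
  have "is_barycenter \<mu> l"
    unfolding is_barycenter_def using Fl FV[of l] unfolding F_def V_def by simp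
  then have lb: "l = b" by (rule uniq)
  have "(\<lambda>n. (dist x0 (bs (r n)))\<^sup>2) \<longlonglongrightarrow> (dist x0 l)\<^sup>2"
    using lim by (intro tendsto_intros) (simp add: o_def)
  then have "(dist x0 l)\<^sup>2 \<le> V"
    by (rule LIMSEQ_le_const2) (use d_le in auto)
  then show ?thesis using lb unfolding V_def by simp
qed


lemma sqrt_ennreal_le:
  assumes "ennreal V \<le> c^2" "0 \<le> V"
  shows "ennreal (sqrt V) \<le> c"
proof (cases c)
  case (real r)
  then have "ennreal V \<le> ennreal (r^2)" using assms(1) by (simp add: ennreal_power)
  then have "V \<le> r^2" by (subst (asm) ennreal_le_iff) auto
  then have "sqrt V \<le> sqrt (r^2)" by (rule real_sqrt_le_mono)
  also have "sqrt (r^2) = r" using real by auto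
  finally have "sqrt V \<le> r" .
  then show ?thesis using real by (simp add: ennreal_leI)
next
  case top
  then show ?thesis by simp
qed

theorem corollary3p2:
  fixes X :: "'a::complete_space set"
  assumes "compact X"
    and "\<forall>\<mu>\<in>prob_measures_on X. \<exists>y. is_barycenter \<mu> y"
    and "compact (conv X)"
    and "\<exists>\<mu>\<in>prob_measures_on X. (\<forall>\<nu>\<in>prob_measures_on X. Var \<nu> \<le> Var \<mu>)
            \<and> (\<exists>!y. is_barycenter \<mu> y)"
  shows "circumradius X = circumradius_dirac X"
proof -
  obtain \<mu> where mu: "\<mu> \<in> prob_measures_on X" and mx: "\<forall>\<nu>\<in>prob_measures_on X. Var \<nu> \<le> Var \<mu>"
    and ex1: "\<exists>!y. is_barycenter \<mu> y"
    using assms(4) by blast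
  obtain b where b: "is_barycenter \<mu> b" and uniq: "\<And>y. is_barycenter \<mu> y \<Longrightarrow> y = b"
    using ex1 by blast
  define V where "V = Var \<mu>"
  have V0: "0 \<le> V" unfolding V_def by (rule Var_nonneg)
  have d: "dist x b \<le> sqrt V" if "x \<in> X" for x
    using L5[OF assms(1,2,3) mu mx uniq that] V0 unfolding V_def by (simp add: real_le_rsqrt)
  have "circumradius X \<le> (SUP x\<in>X. ennreal (dist x b))"
    unfolding circumradius_def by (rule INF_lower) simp
  also have "\<dots> \<le> ennreal (sqrt V)"
    by (rule SUP_least) (simp add: d ennreal_leI)
  also have "\<dots> \<le> circumradius_dirac X"
    unfolding circumradius_dirac_def
  proof (rule INF_greatest)
    fix \<nu> :: "'a measure" assume nu: "\<nu> \<in> prob_measures"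
    show "ennreal (sqrt V) \<le> (SUP x\<in>X. W2_dirac x \<nu>)"
      by (rule sqrt_ennreal_le[OF _ V0]) (unfold V_def, rule L3[OF assms(1) mu nu])
  qed
  finally show ?thesis using L1[of X] by (rule antisym)
qed

end
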